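(* Let $X=\{x_1,\dots,x_m\} \subset \mathbb{R}^n$ be a finite set of vectors, let $\alpha>0$, $\lambda \ge 0$, and $w_{ij} \ge 0$ for $j=2,\dots,m$, $i=1,\dots,j-1$. Let $z^* = \begin{bmatrix}(z_1^* )^T & \dots & (z_m^* )^T\end{bmatrix}^T \in \mathbb{R}^{mn}$ (with each $z_i^* \in \mathbb{R}^n$) be a local optimal solution of \[ \min_{z \in \mathbb{R}^{mn}} \; g(z;\alpha) := \sum_{i=1}^m \|x_i - z_i\|^2 + \lambda \sum_{j=2}^m \sum_{i=1}^{j-1} w_{ij}\Bigl(1 - e^{-\alpha \|z_i - z_j\|^2}\Bigr), \] where $z = \begin{bmatrix} z_1^T & \dots & z_m^T\end{bmatrix}^T$ with $z_i \in \mathbb{R}^n$. Then $z_1^*,\dots,z_m^*$ all lie in the convex hull of $X$.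
   Context: $\|\cdot\|$ denotes the Euclidean norm. *)

theory Defs
  imports "HOL-Analysis.Analysis"
begin

text \<open>Points x_1..x_m and z_1..z_m are indexed 0..m-1. The objective g(z; alpha).\<close>
definition obj_g ::
  "nat \<Rightarrow> (nat \<Rightarrow> real^'n) \<Rightarrow> real \<Rightarrow> (nat \<Rightarrow> nat \<Rightarrow> real) \<Rightarrow> real
   \<Rightarrow> (nat \<Rightarrow> real^'n) \<Rightarrow> real" where
  "obj_g m x lam w \<alpha> z =
     (\<Sum>i<m. (norm (x i - z i))^2)
     + lam * (\<Sum>j<m. \<Sum>i<j. w i j * (1 - exp (- \<alpha> * (norm (z i - z j))^2)))"

definition stacked_dist :: "nat \<Rightarrow> (nat \<Rightarrow> real^'n) \<Rightarrow> (nat \<Rightarrow> real^'n) \<Rightarrow> real" where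
  "stacked_dist m z z' = sqrt (\<Sum>i<m. (norm (z i - z' i))^2)"

definition local_min_stacked ::
  "nat \<Rightarrow> ((nat \<Rightarrow> real^'n) \<Rightarrow> real) \<Rightarrow> (nat \<Rightarrow> real^'n) \<Rightarrow> bool" where
  "local_min_stacked m f z \<longleftrightarrow>
     (\<exists>e>0. \<forall>z'. stacked_dist m z' z < e \<longrightarrow> f z \<le> f z')"

end

theory Submission imports Defs begin

lemma fid:
  fixes S :: "'a::euclidean_space set"
  assumes "convex S" "closed S" "x \<in> S" "0 \<le> t" "t \<le> 1"
  shows "(norm (x - (z + t *\<^sub>R (closest_point S z - z))))^2
         \<le> (norm (x - z))^2 - t * (norm (closest_point S z - z))^2"
proof -
  define p where "p = closest_point S z"
  have d: "inner (z - p) (x - p) \<le> 0" using closest_point_dot[OF assms(1-3)] p_def by simp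
  have e: "x - (z + t *\<^sub>R (p - z)) = (x - z) - t *\<^sub>R (p - z)" by simp
  have "(norm ((x - z) - t *\<^sub>R (p - z)))^2 = (norm (x-z))^2 - 2*t*inner (x - z) (p - z) + t^2 * (norm (p - z))^2"
    unfolding power2_norm_eq_inner by (simp add: inner_diff_left inner_diff_right algebra_simps power2_eq_square inner_commute)
  moreover have "inner (x - z) (p - z) = inner (x - p) (p - z) + (norm (p - z))^2"
    by (simp add: power2_norm_eq_inner inner_diff_left inner_diff_right algebra_simps)
  moreover have "inner (x - p) (p - z) \<ge> 0" using d
    by (simp add: inner_diff_left inner_diff_right inner_commute algebra_simps)
  moreover have "t^2 * (norm (p - z))^2 \<le> t * (norm (p - z))^2"
    using assms(4,5) by (intro mult_right_mono) (simp_all add: power2_eq_square mult_left_le_one_le)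
  moreover have "t * inner (x - p) (p - z) \<ge> 0" using calculation(3) assms(4) by simp
  ultimately show ?thesis unfolding p_def[symmetric] e
    by (simp only: distrib_left[symmetric]) (simp add: algebra_simps)
qed

lemma pair:
  fixes S :: "'a::euclidean_space set"
  assumes "convex S" "closed S" "S \<noteq> {}" "0 \<le> t" "t \<le> 1"
  shows "norm ((a + t *\<^sub>R (closest_point S a - a)) - (b + t *\<^sub>R (closest_point S b - b))) \<le> norm (a - b)"
proof -
  have e: "(a + t *\<^sub>R (closest_point S a - a)) - (b + t *\<^sub>R (closest_point S b - b))
     = (1 - t) *\<^sub>R (a - b) + t *\<^sub>R (closest_point S a - closest_point S b)"
    by (simp add: algebra_simps)
  have l: "norm (closest_point S a - closest_point S b) \<le> norm (a - b)"
    using closest_point_lipschitz[OF assms(1-3), of a b] by (simp add: dist_norm)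
  have "norm ((1 - t) *\<^sub>R (a - b) + t *\<^sub>R (closest_point S a - closest_point S b))
     \<le> (1 - t) * norm (a - b) + t * norm (closest_point S a - closest_point S b)"
    using assms(4,5) norm_triangle_ineq[of "(1 - t) *\<^sub>R (a - b)" "t *\<^sub>R (closest_point S a - closest_point S b)"]
    by simp
  also have "\<dots> \<le> (1 - t) * norm (a - b) + t * norm (a - b)"
    using l assms(4) by (simp add: mult_left_mono)
  finally show ?thesis unfolding e by (simp add: algebra_simps)
qed

theorem proposition1:
  fixes m :: nat and x :: "nat \<Rightarrow> real^'n" and zs :: "nat \<Rightarrow> real^'n"
    and \<alpha> lam :: real and w :: "nat \<Rightarrow> nat \<Rightarrow> real"
  assumes "\<alpha> > 0" and "lam \<ge> 0"
    and "\<And>i j. i < j \<Longrightarrow> j < m \<Longrightarrow> w i j \<ge> 0"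
    and "local_min_stacked m (obj_g m x lam w \<alpha>) zs"
  shows "\<forall>i<m. zs i \<in> convex hull (x ` {..<m})"
proof (rule ccontr)
  assume "\<not> ?thesis"
  then obtain k where k: "k < m" "zs k \<notin> convex hull (x ` {..<m})" by blast
  define C where "C = convex hull (x ` {..<m})"
  have cC: "convex C" unfolding C_def by simp
  have clC: "closed C" unfolding C_def
    by (simp add: compact_imp_closed compact_convex_hull finite_imp_compact)
  have neC: "C \<noteq> {}" unfolding C_def using k(1) by auto
  have xC: "x i \<in> C" if "i < m" for i unfolding C_def using that by (simp add: hull_inc)
  obtain e where e: "e > 0" "\<And>z'. stacked_dist m z' zs < e \<Longrightarrow> obj_g m x lam w \<alpha> zs \<le> obj_g m x lam w \<alpha> z'"
    using assms(4) unfolding local_min_stacked_def by blast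
  define P where "P = closest_point C"
  define S where "S = (\<Sum>i<m. (norm (P (zs i) - zs i))^2)"
  have S0: "S \<ge> 0" unfolding S_def by (intro sum_nonneg) simp
  define t where "t = min 1 (e / (2 * (S + 1)))"
  have t0: "t > 0" unfolding t_def using e(1) S0 by simp
  have t1: "t \<le> 1" unfolding t_def by simp
  define z' where "z' = (\<lambda>i. zs i + t *\<^sub>R (P (zs i) - zs i))"
  have "stacked_dist m z' zs = sqrt (t^2 * S)"
    unfolding stacked_dist_def z'_def S_def
    by (simp add: sum_distrib_left power_mult_distrib)
  also have "\<dots> = t * sqrt S" using t0 by (simp add: real_sqrt_mult)
  also have "\<dots> \<le> t * (S + 1)"
  proof -
    have "sqrt S \<le> sqrt ((S+1)^2)" using S0 by (intro real_sqrt_le_mono) (simp add: power2_eq_square algebra_simps)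
    also have "\<dots> = S + 1" using S0 by simp
    finally show ?thesis using t0 by simp
  qed
  also have "\<dots> \<le> e / (2 * (S + 1)) * (S + 1)" unfolding t_def using S0
    by (intro mult_right_mono) auto
  also have "\<dots> = e / 2" using S0 by (simp add: field_simps)
  also have "\<dots> < e" using e(1) by simp
  finally have le: "obj_g m x lam w \<alpha> zs \<le> obj_g m x lam w \<alpha> z'" by (rule e(2))
  have f1: "(norm (x i - z' i))^2 \<le> (norm (x i - zs i))^2 - t * (norm (P (zs i) - zs i))^2"
    if "i < m" for i
    unfolding z'_def P_def using fid[OF cC clC xC[OF that], of t "zs i"] t0 t1 by simp
  have "P (zs k) \<noteq> zs k" unfolding P_def using closest_point_refl[OF clC neC] k(2) C_def by simp
  then have "t * (norm (P (zs k) - zs k))^2 > 0" using t0 by simp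
  then have lt: "(norm (x k - z' k))^2 < (norm (x k - zs k))^2" using f1[OF k(1)] by linarith
  have lei: "(norm (x i - z' i))^2 \<le> (norm (x i - zs i))^2" if "i \<in> {..<m}" for i
  proof -
    have "t * (norm (P (zs i) - zs i))^2 \<ge> 0" using t0 by simp
    moreover have "i < m" using that by simp
    ultimately show ?thesis using f1[of i] by linarith
  qed
  have fid_lt: "(\<Sum>i<m. (norm (x i - z' i))^2) < (\<Sum>i<m. (norm (x i - zs i))^2)"
    using lei lt k(1) by (intro sum_strict_mono_ex1) auto
  have pr: "w i j * (1 - exp (- \<alpha> * (norm (z' i - z' j))^2)) \<le> w i j * (1 - exp (- \<alpha> * (norm (zs i - zs j))^2))"
    if "i < j" "j < m" for i j
  proof -
    have n: "norm (z' i - z' j) \<le> norm (zs i - zs j)"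
      unfolding z'_def P_def using pair[OF cC clC neC, of t "zs i" "zs j"] t0 t1 by simp
    then have "(norm (z' i - z' j))^2 \<le> (norm (zs i - zs j))^2" by (simp add: power_mono)
    then have "- \<alpha> * (norm (zs i - zs j))^2 \<le> - \<alpha> * (norm (z' i - z' j))^2" using assms(1) by simp
    then have "exp (- \<alpha> * (norm (zs i - zs j))^2) \<le> exp (- \<alpha> * (norm (z' i - z' j))^2)" by simp
    then show ?thesis using assms(3)[OF that] by (intro mult_left_mono) auto
  qed
  have "(\<Sum>j<m. \<Sum>i<j. w i j * (1 - exp (- \<alpha> * (norm (z' i - z' j))^2)))
      \<le> (\<Sum>j<m. \<Sum>i<j. w i j * (1 - exp (- \<alpha> * (norm (zs i - zs j))^2)))"
    by (intro sum_mono) (use pr in auto)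
  then have "lam * (\<Sum>j<m. \<Sum>i<j. w i j * (1 - exp (- \<alpha> * (norm (z' i - z' j))^2)))
      \<le> lam * (\<Sum>j<m. \<Sum>i<j. w i j * (1 - exp (- \<alpha> * (norm (zs i - zs j))^2)))"
    using assms(2) by (rule mult_left_mono)
  with fid_lt have "obj_g m x lam w \<alpha> z' < obj_g m x lam w \<alpha> zs" unfolding obj_g_def by linarith
  with le show False by simp
qed

end
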